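(* For any hypergraph PIN model on a $t$-uniform hypergraph $\mathcal H=(\mathcal M,\mathcal E)$, any $n\in\mathbb N$, and any function $\mathbf L$ of $X^n_{\mathcal M}$, $$\sum_{i=1}^m I(X_i^n;\mathbf L)\le t\,H(\mathbf L).$$
   Context: Let $\mathcal M=\{1,\dots,m\}$. A hypergraph PIN model is defined from a hypergraph $\mathcal H=(\mathcal M,\mathcal E)$, where $\mathcal E$ is a finite multiset of subsets (hyperedges) of $\mathcal M$. For $n\in\mathbb N$, $\mathcal E^{(n)}$ is the multiset with $n$ copies of each element of $\mathcal E$. Each $e\in\mathcal E^{(n)}$ carries an independent Bernoulli(1/2) random variable $\xi_e$, and $X^n_i=(\xi_e:e\in\mathcal E^{(n)},\ i\in e)$, with $X^n_{\mathcal M}=(X^n_1,\dots,X^n_m)$. $\mathcal H$ is $t$-uniform if every hyperedge has exactly $t$ elements. *)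

theory Defs
  imports "HOL-Probability.Probability"
begin

(* A hypergraph on vertex set {1..m} is given by a list E of hyperedges
   (a list represents the finite multiset of hyperedges; order is irrelevant,
   repeated entries are distinct hyperedges).
   The multiset E^(n) consists of the pairs (j,k) with j < length E, k < n:
   (j,k) is the k-th copy of the hyperedge E!j. *)

definition is_hypergraph :: "nat \<Rightarrow> nat set list \<Rightarrow> bool" where
  "is_hypergraph m E \<longleftrightarrow> (\<forall>e\<in>set E. e \<subseteq> {1..m})"

definition t_uniform :: "nat \<Rightarrow> nat set list \<Rightarrow> bool" where
  "t_uniform t E \<longleftrightarrow> (\<forall>e\<in>set E. card e = t)"

definition pin_edges :: "nat set list \<Rightarrow> nat \<Rightarrow> (nat \<times> nat) set" where
  "pin_edges E n = {0..<length E} \<times> {0..<n}"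

definition pin_space :: "nat set list \<Rightarrow> nat \<Rightarrow> ((nat \<times> nat) \<Rightarrow> bool) measure" where
  "pin_space E n = measure_pmf (Pi_pmf (pin_edges E n) False (\<lambda>_. bernoulli_pmf (1/2)))"

definition pin_X :: "nat set list \<Rightarrow> nat \<Rightarrow> nat \<Rightarrow> ((nat \<times> nat) \<Rightarrow> bool) \<Rightarrow> ((nat \<times> nat) \<Rightarrow> bool)" where
  "pin_X E n i \<xi> = restrict \<xi> {(j, k) \<in> pin_edges E n. i \<in> E ! j}"

definition pin_XM :: "nat set list \<Rightarrow> nat \<Rightarrow> nat \<Rightarrow> ((nat \<times> nat) \<Rightarrow> bool) \<Rightarrow> (nat \<Rightarrow> (nat \<times> nat) \<Rightarrow> bool)" where
  "pin_XM E n m \<xi> = (\<lambda>i\<in>{1..m}. pin_X E n i \<xi>)"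

end

theory Submission imports Defs begin

lemma (in prob_space) regroup:
  assumes F: "simple_function M F" and G: "\<And>w. G w = \<phi> (F w)"
  shows "(\<Sum>v\<in>F`space M. prob (F -` {v} \<inter> space M) * h (\<phi> v))
       = (\<Sum>u\<in>G`space M. prob (G -` {u} \<inter> space M) * h u)"
proof -
  have fin: "finite (F`space M)" using F by (rule simple_functionD)
  have GF: "G`space M = \<phi> ` (F`space M)" using G by (auto simp: image_image)
  have pr: "prob (G -` {u} \<inter> space M) = (\<Sum>v\<in>{v. v \<in> F`space M \<and> \<phi> v = u}. prob (F -` {v} \<inter> space M))"
    for u
  proof -
    have "G -` {u} \<inter> space M = (\<Union>v\<in>{v. v \<in> F`space M \<and> \<phi> v = u}. F -` {v} \<inter> space M)"
      using G by auto
    also have "prob \<dots> = (\<Sum>v\<in>{v. v \<in> F`space M \<and> \<phi> v = u}. prob (F -` {v} \<inter> space M))"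
      by (rule finite_measure_finite_Union) 
         (use fin F in \<open>auto simp: disjoint_family_on_def intro: simple_functionD(2)\<close>)
    finally show ?thesis .
  qed
  have "(\<Sum>v\<in>F`space M. prob (F -` {v} \<inter> space M) * h (\<phi> v))
      = (\<Sum>u\<in>\<phi>`(F`space M). \<Sum>v\<in>{v. v \<in> F`space M \<and> \<phi> v = u}. prob (F -` {v} \<inter> space M) * h (\<phi> v))"
    by (rule sum.image_gen[OF fin])
  also have "\<dots> = (\<Sum>u\<in>\<phi>`(F`space M). prob (G -` {u} \<inter> space M) * h u)"
    unfolding pr sum_distrib_right by (intro sum.cong refl) auto
  finally show ?thesis by (simp add: GF)
qed

lemma (in information_space) ent_eq:
  assumes F: "simple_function M F"
  shows "\<H>(F) = - (\<Sum>v\<in>F`space M. prob (F -` {v} \<inter> space M) * log b (prob (F -` {v} \<inter> space M)))"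
  by (rule entropy_simple_distributed[OF simple_distributedI[OF F measure_nonneg refl]])

lemma (in information_space) submod:
  assumes X: "simple_function M X" and Y: "simple_function M Y" and Z: "simple_function M Z"
  shows "\<H>(\<lambda>w. (X w, Y w, Z w)) + \<H>(Z) \<le> \<H>(\<lambda>w. (X w, Z w)) + \<H>(\<lambda>w. (Y w, Z w))"
proof -
  let ?T = "\<lambda>w. (X w, Y w, Z w)" and ?XZ = "\<lambda>w. (X w, Z w)" and ?YZ = "\<lambda>w. (Y w, Z w)"
  have T: "simple_function M ?T" using X Y Z by (intro simple_function_Pair)
  have XZ: "simple_function M ?XZ" using X Z by (intro simple_function_Pair)
  have YZ: "simple_function M ?YZ" using Y Z by (intro simple_function_Pair)
  define Pxyz where "Pxyz v = prob (?T -` {v} \<inter> space M)" for v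
  define Pxz where "Pxz v = prob (?XZ -` {v} \<inter> space M)" for v
  define Pyz where "Pyz v = prob (?YZ -` {v} \<inter> space M)" for v
  define Pz where "Pz v = prob (Z -` {v} \<inter> space M)" for v
  note sd = simple_distributedI[OF _ measure_nonneg refl]
  have key: "Pxyz (X w, Y w, Z w) * log b (Pxyz (X w, Y w, Z w) / (Pxz (X w, Z w) * (Pyz (Y w, Z w) / Pz (Z w)))) =
         Pxyz (X w, Y w, Z w) * log b (Pxyz (X w, Y w, Z w)) - Pxyz (X w, Y w, Z w) * log b (Pxz (X w, Z w)) 
         - Pxyz (X w, Y w, Z w) * log b (Pyz (Y w, Z w)) + Pxyz (X w, Y w, Z w) * log b (Pz (Z w))"
    if w: "w \<in> space M" for w
  proof -
    let ?x = "X w" and ?y = "Y w" and ?z = "Z w"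
    show ?thesis
    proof (cases "Pxyz (?x, ?y, ?z) = 0")
      case True then show ?thesis by simp
    next
      case False
      have ev: "?T -` {(?x,?y,?z)} \<inter> space M \<in> events" "?XZ -` {(?x,?z)} \<inter> space M \<in> events"
        "?YZ -` {(?y,?z)} \<inter> space M \<in> events" "Z -` {?z} \<inter> space M \<in> events"
        using T XZ YZ Z w by (auto intro: simple_functionD(2))
      have p0: "0 < Pxyz (?x, ?y, ?z)" using False by (simp add: Pxyz_def zero_less_measure_iff)
      have "Pxyz (?x, ?y, ?z) \<le> Pxz (?x, ?z)" unfolding Pxyz_def Pxz_def
        by (rule finite_measure_mono) (use ev in auto)
      hence p1: "0 < Pxz (?x, ?z)" using p0 by simp
      have "Pxyz (?x, ?y, ?z) \<le> Pyz (?y, ?z)" unfolding Pxyz_def Pyz_def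
        by (rule finite_measure_mono) (use ev in auto)
      hence p2: "0 < Pyz (?y, ?z)" using p0 by simp
      have "Pxyz (?x, ?y, ?z) \<le> Pz ?z" unfolding Pxyz_def Pz_def
        by (rule finite_measure_mono) (use ev in auto)
      hence p3: "0 < Pz ?z" using p0 by simp
      show ?thesis using p0 p1 p2 p3 b_gt_1
        by (simp add: log_divide log_mult algebra_simps)
    qed
  qed
  have "0 \<le> \<I>(X ; Y | Z)" by (rule conditional_mutual_information_nonneg[OF X Y Z])
  also have "\<I>(X ; Y | Z) = (\<Sum>(x, y, z)\<in>?T`space M. Pxyz (x, y, z) * log b (Pxyz (x, y, z) / (Pxz (x, z) * (Pyz (y,z) / Pz z))))"
    unfolding Pxyz_def Pxz_def Pyz_def Pz_def
    by (rule conditional_mutual_information_eq[OF sd[OF Z] sd[OF YZ] sd[OF XZ] sd[OF T]])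
  also have "\<dots> = (\<Sum>v\<in>?T`space M. Pxyz v * log b (Pxyz v))
     - (\<Sum>v\<in>?T`space M. Pxyz v * log b (Pxz (fst v, snd (snd v))))
     - (\<Sum>v\<in>?T`space M. Pxyz v * log b (Pyz (fst (snd v), snd (snd v))))
     + (\<Sum>v\<in>?T`space M. Pxyz v * log b (Pz (snd (snd v))))"
    unfolding sum_subtractf[symmetric] sum.distrib[symmetric]
    using key by (auto intro!: sum.cong)
  also have "(\<Sum>v\<in>?T`space M. Pxyz v * log b (Pxyz v)) = - \<H>(?T)"
    unfolding ent_eq[OF T] Pxyz_def by simp
  also have "(\<Sum>v\<in>?T`space M. Pxyz v * log b (Pxz (fst v, snd (snd v)))) = - \<H>(?XZ)"
    unfolding ent_eq[OF XZ] Pxyz_def Pxz_def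
    by (subst regroup[OF T, of ?XZ "\<lambda>v. (fst v, snd (snd v))"]) auto
  also have "(\<Sum>v\<in>?T`space M. Pxyz v * log b (Pyz (fst (snd v), snd (snd v)))) = - \<H>(?YZ)"
    unfolding ent_eq[OF YZ] Pxyz_def Pyz_def
    by (subst regroup[OF T, of ?YZ "\<lambda>v. (fst (snd v), snd (snd v))"]) auto
  also have "(\<Sum>v\<in>?T`space M. Pxyz v * log b (Pz (snd (snd v)))) = - \<H>(Z)"
    unfolding ent_eq[OF Z] Pxyz_def Pz_def
    by (subst regroup[OF T, of Z "\<lambda>v. snd (snd v)"]) auto
  finally show ?thesis by simp
qed

lemma shearer:
  fixes G :: "'a set \<Rightarrow> real" and A :: "'i \<Rightarrow> 'a set"
  assumes "finite D" "finite I"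
    and "\<And>S T. S \<subseteq> D \<Longrightarrow> T \<subseteq> D \<Longrightarrow> G (S \<union> T) + G (S \<inter> T) \<le> G S + G T"
    and "\<And>i. i \<in> I \<Longrightarrow> A i \<subseteq> D" and "\<And>d. d \<in> D \<Longrightarrow> card {i\<in>I. d \<in> A i} = t"
  shows "real t * (G D - G {}) \<le> (\<Sum>i\<in>I. G (A i) - G {})"
  using assms(1,3-5)
proof (induction D arbitrary: A rule: finite_induct)
  case empty
  then show ?case by auto
next
  case (insert d F)
  define A' where "A' i = A i - {d}" for i
  have IH: "real t * (G F - G {}) \<le> (\<Sum>i\<in>I. G (A' i) - G {})"
  proof (rule insert.IH)
    show "G (S \<union> T) + G (S \<inter> T) \<le> G S + G T" if "S \<subseteq> F" "T \<subseteq> F" for S T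
      using insert.prems(1) that by blast
    show "A' i \<subseteq> F" if "i \<in> I" for i using insert.prems(2)[OF that] by (auto simp: A'_def)
    show "card {i \<in> I. d' \<in> A' i} = t" if "d' \<in> F" for d'
    proof -
      have "{i \<in> I. d' \<in> A' i} = {i \<in> I. d' \<in> A i}" using that insert.hyps by (auto simp: A'_def)
      thus ?thesis using insert.prems(3) that by simp
    qed
  qed
  have step: "(if d \<in> A i then G (insert d F) - G F else 0) \<le> G (A i) - G (A' i)" if i: "i \<in> I" for i
  proof (cases "d \<in> A i")
    case True
    have "A i \<union> F = insert d F" using True insert.prems(2)[OF i] by auto
    moreover have "A i \<inter> F = A' i" using insert.prems(2)[OF i] insert.hyps by (auto simp: A'_def)
    moreover have "G (A i \<union> F) + G (A i \<inter> F) \<le> G (A i) + G F"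
      using insert.prems(1)[of "A i" F] insert.prems(2)[OF i] by auto
    ultimately show ?thesis using True by simp
  next
    case False then show ?thesis by (simp add: A'_def)
  qed
  have "real t * (G (insert d F) - G F) = (\<Sum>i\<in>I. if d \<in> A i then G (insert d F) - G F else 0)"
    using insert.prems(3)[of d] assms(2) by (simp add: sum.If_cases Collect_conj_eq Int_commute)
  also have "\<dots> \<le> (\<Sum>i\<in>I. G (A i) - G (A' i))" by (rule sum_mono) (rule step)
  finally have "real t * (G (insert d F) - G F) \<le> (\<Sum>i\<in>I. G (A i) - G (A' i))" .
  with IH have "real t * (G (insert d F) - G F) + real t * (G F - G {}) \<le>
     (\<Sum>i\<in>I. G (A i) - G (A' i)) + (\<Sum>i\<in>I. G (A' i) - G {})" by linarith
  also have "\<dots> = (\<Sum>i\<in>I. G (A i) - G {})" by (simp add: sum.distrib[symmetric])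
  finally show ?case by (simp add: algebra_simps)
qed

lemma (in information_space) ent_bij:
  assumes X: "simple_function M X" and f: "\<And>w. Y w = f (X w)" and h: "\<And>w. w \<in> space M \<Longrightarrow> X w = h (Y w)"
  shows "\<H>(Y) = \<H>(X)"
proof -
  have "Y = f \<circ> X" by (rule ext) (simp add: f)
  moreover have "inj_on f (X`space M)"
    by (rule inj_onI) (metis f h image_iff)
  ultimately show ?thesis using entropy_of_inj[OF X] by simp
qed

lemma (in information_space) mi_eq:
  assumes X: "simple_function M X" and Y: "simple_function M Y"
  shows "\<I>(X ; Y) = \<H>(X) + \<H>(Y) - \<H>(\<lambda>w. (Y w, X w))"
  using mutual_information_eq_entropy_conditional_entropy[OF X Y] entropy_chain_rule[OF Y X] by simp

lemma sf_pmf: "finite (range f) \<Longrightarrow> simple_function (measure_pmf p) f"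
  by (simp add: simple_function_def)

theorem lemma4:
  fixes m t n :: nat and E :: "nat set list"
    and g :: "(nat \<Rightarrow> (nat \<times> nat) \<Rightarrow> bool) \<Rightarrow> 'b" and L :: "((nat \<times> nat) \<Rightarrow> bool) \<Rightarrow> 'b"
  assumes "is_hypergraph m E"
    and "t_uniform t E"
    and "L = g \<circ> pin_XM E n m"
  shows "(\<Sum>i=1..m. prob_space.mutual_information (pin_space E n) 2
            (count_space (pin_X E n i ` space (pin_space E n)))
            (count_space (L ` space (pin_space E n)))
            (pin_X E n i) L)
         \<le> real t * prob_space.entropy (pin_space E n) 2
            (count_space (L ` space (pin_space E n))) L"
proof -
  define D where "D = pin_edges E n"
  define P where "P = Pi_pmf D False (\<lambda>_. bernoulli_pmf (1/2))"
  define R :: "(nat \<times> nat) set \<Rightarrow> ((nat \<times> nat) \<Rightarrow> bool) \<Rightarrow> ((nat \<times> nat) \<Rightarrow> bool)"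
    where "R S w = restrict w S" for S w
  define A where "A i = {(j,k)\<in>D. i \<in> E!j}" for i
  have MP: "pin_space E n = measure_pmf P" by (simp add: pin_space_def P_def D_def)
  have finD: "finite D" by (simp add: D_def pin_edges_def)
  have AD: "A i \<subseteq> D" for i by (auto simp: A_def)
  have pinX: "pin_X E n i = R (A i)" for i
    by (rule ext) (simp add: pin_X_def R_def A_def D_def)
  have LR: "L w = L (R D w)" for w
  proof -
    have "pin_XM E n m (R D w) = pin_XM E n m w"
      unfolding pin_XM_def pinX R_def using AD by (simp add: Int_absorb1)
    thus ?thesis using assms(3) by simp
  qed
  have imgR: "R S ` UNIV = PiE S (\<lambda>_. UNIV :: bool set)" for S
  proof
    show "R S ` UNIV \<subseteq> PiE S (\<lambda>_. UNIV :: bool set)" by (auto simp: R_def)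
    show "PiE S (\<lambda>_. UNIV :: bool set) \<subseteq> R S ` UNIV"
    proof
      fix x assume "x \<in> PiE S (\<lambda>_. UNIV :: bool set)"
      hence "x = R S x" by (auto simp: R_def PiE_def extensional_def restrict_def)
      thus "x \<in> R S ` UNIV" by blast
    qed
  qed
  have cardR: "finite S \<Longrightarrow> card (R S ` UNIV) = 2 ^ card S" for S
    by (simp add: imgR card_PiE)
  have finR: "finite S \<Longrightarrow> finite (R S ` UNIV)" for S
    by (simp add: imgR finite_PiE)
  interpret information_space "pin_space E n" 2
    unfolding MP by (rule information_space.intro[OF prob_space_measure_pmf]) (simp add: information_space_axioms_def)
  have spc: "space (pin_space E n) = UNIV" by (simp add: MP)
  have sfR: "simple_function (pin_space E n) (R S)" if "S \<subseteq> D" for S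
    unfolding MP using finR[OF finite_subset[OF that finD]] by (rule sf_pmf)
  have sfL: "simple_function (pin_space E n) L"
  proof -
    have "range L = L ` (R D ` UNIV)" using LR by (auto simp: image_image)
    hence "finite (range L)" using finR[OF finD] by simp
    thus ?thesis unfolding MP by (rule sf_pmf)
  qed
  define G where "G S = entropy 2 (count_space ((\<lambda>w. (L w, R S w)) ` space (pin_space E n))) (\<lambda>w. (L w, R S w))" for S
  have sp2: "simple_function (pin_space E n) (\<lambda>w. (X w, Y w))"
    if "simple_function (pin_space E n) X" "simple_function (pin_space E n) Y" for X :: "_ \<Rightarrow> 'x" and Y :: "_ \<Rightarrow> 'y"
    using that by (rule simple_function_Pair)
  have Gsub: "G (S \<union> T) + G (S \<inter> T) \<le> G S + G T" if ST: "S \<subseteq> D" "T \<subseteq> D" for S T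
  proof -
    let ?Z = "\<lambda>w. (L w, R (S \<inter> T) w)"
    have sZ: "simple_function (pin_space E n) ?Z" using ST by (intro sp2 sfL sfR) auto
    have sS: "simple_function (pin_space E n) (R S)" and sT: "simple_function (pin_space E n) (R T)"
      using ST sfR by auto
    have 1: "G (S \<union> T) = entropy 2 (count_space ((\<lambda>w. (R S w, R T w, ?Z w)) ` space (pin_space E n))) (\<lambda>w. (R S w, R T w, ?Z w))"
      unfolding G_def
      by (rule ent_bij[where f="\<lambda>(a,b,(l,c)). (l, \<lambda>x. if x\<in>S then a x else b x)"
            and h="\<lambda>(l,u). (restrict u S, restrict u T, (l, restrict u (S\<inter>T)))"], intro sp2 sS sT sZ)
         (auto simp: R_def fun_eq_iff restrict_def)
    have 2: "G S = entropy 2 (count_space ((\<lambda>w. (R S w, ?Z w)) ` space (pin_space E n))) (\<lambda>w. (R S w, ?Z w))"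
      unfolding G_def
      by (rule ent_bij[where f="\<lambda>(a,(l,c)). (l, a)"
            and h="\<lambda>(l,u). (u, (l, restrict u (S\<inter>T)))"], intro sp2 sS sT sZ)
         (auto simp: R_def fun_eq_iff restrict_def)
    have 3: "G T = entropy 2 (count_space ((\<lambda>w. (R T w, ?Z w)) ` space (pin_space E n))) (\<lambda>w. (R T w, ?Z w))"
      unfolding G_def
      by (rule ent_bij[where f="\<lambda>(a,(l,c)). (l, a)"
            and h="\<lambda>(l,u). (u, (l, restrict u (S\<inter>T)))"], intro sp2 sS sT sZ)
         (auto simp: R_def fun_eq_iff restrict_def)
    show ?thesis unfolding 1 2 3 G_def[of "S \<inter> T"] by (rule submod[OF sS sT sZ])
  qed
  have GD: "G D = entropy 2 (count_space (R D ` space (pin_space E n))) (R D)"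
    unfolding G_def
    by (rule ent_bij[where f="\<lambda>u. (L u, u)" and h="\<lambda>(l,u). u"])
       (use LR in \<open>auto intro!: sfR\<close>)
  have G0: "G {} = entropy 2 (count_space (L ` space (pin_space E n))) L"
    unfolding G_def
    by (rule ent_bij[where f="\<lambda>l. (l, \<lambda>x. undefined)" and h="\<lambda>(l,u). l"])
       (auto intro!: sfL simp: R_def)
  have HD: "entropy 2 (count_space (R D ` space (pin_space E n))) (R D) = real (card D)"
  proof -
    have pr: "prob (R D -` {v} \<inter> space (pin_space E n)) = (1/2) ^ card D"
      if vin: "v \<in> R D ` space (pin_space E n)" for v
    proof -
      obtain w0 where v: "v = R D w0" using vin by blast
      define v' where "v' x = (if x \<in> D then v x else False)" for x
      have setP: "set_pmf P = {f. \<forall>x. x\<notin>D \<longrightarrow> f x = False}"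
        by (simp add: P_def set_Pi_pmf finD PiE_dflt_def o_def)
      have "R D -` {v} \<inter> space (pin_space E n) \<inter> set_pmf P = {v'}"
        using setP v by (auto simp: R_def v'_def fun_eq_iff restrict_def spc)
      hence "prob (R D -` {v} \<inter> space (pin_space E n)) = measure (measure_pmf P) {v'}"
        using measure_Int_set_pmf[of P "R D -` {v} \<inter> space (pin_space E n)"] by (simp add: MP)
      also have "\<dots> = pmf P v'" by (rule measure_pmf_single)
      also have "\<dots> = (\<Prod>x\<in>D. pmf (bernoulli_pmf (1/2)) (v' x))"
        unfolding P_def by (rule pmf_Pi'[OF finD]) (simp add: v'_def)
      also have "\<dots> = (1/2) ^ card D" by simp
      finally show ?thesis .
    qed
    have "entropy 2 (count_space (R D ` space (pin_space E n))) (R D)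
        = - (\<Sum>v\<in>R D ` space (pin_space E n). (1/2) ^ card D * log 2 ((1/2) ^ card D))"
      unfolding ent_eq[OF sfR[OF order_refl]] using pr by simp
    also have "\<dots> = - (2 ^ card D * ((1/2) ^ card D * (real (card D) * log 2 (1/2))))"
      using cardR[OF finD] by (simp add: spc log_nat_power)
    also have "\<dots> = real (card D)"
      by (simp add: log_divide power_one_over)
    finally show ?thesis .
  qed
  have HA: "entropy 2 (count_space (R S ` space (pin_space E n))) (R S) \<le> real (card S)" if "S \<subseteq> D" for S
  proof -
    have "entropy 2 (count_space (R S ` space (pin_space E n))) (R S) \<le> log 2 (real (card (R S ` space (pin_space E n))))"
      by (rule entropy_le_card[OF simple_distributedI[OF sfR[OF that] measure_nonneg refl]])
    also have "\<dots> = real (card S)"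
      using cardR[OF finite_subset[OF that finD]] by (simp add: spc log_nat_power)
    finally show ?thesis .
  qed
  have cnt: "card {i\<in>{1..m}. d \<in> A i} = t" if dD: "d \<in> D" for d
  proof -
    obtain j k where d: "d = (j,k)" and j: "j < length E" using dD by (cases d) (auto simp: D_def pin_edges_def)
    have "E!j \<in> set E" using j by simp
    hence sub: "E!j \<subseteq> {1..m}" and ct: "card (E!j) = t"
      using assms(1,2) by (auto simp: is_hypergraph_def t_uniform_def)
    have "{i\<in>{1..m}. d \<in> A i} = E!j" using sub dD by (auto simp: A_def d)
    thus ?thesis using ct by simp
  qed
  have sumA: "(\<Sum>i=1..m. card (A i)) = t * card D"
  proof -
    have "(\<Sum>i=1..m. card (A i)) = (\<Sum>i=1..m. \<Sum>d\<in>D. if d \<in> A i then 1 else 0)"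
    proof (intro sum.cong refl)
      fix i
      have "(\<Sum>d\<in>D. if d \<in> A i then 1 else 0) = card (D \<inter> {d. d \<in> A i})"
        using finD by (simp add: sum.If_cases)
      also have "D \<inter> {d. d \<in> A i} = A i" using AD by auto
      finally show "card (A i) = (\<Sum>d\<in>D. if d \<in> A i then 1 else 0)" by simp
    qed
    also have "\<dots> = (\<Sum>d\<in>D. \<Sum>i=1..m. if d \<in> A i then 1 else 0)" by (rule sum.swap)
    also have "\<dots> = (\<Sum>d\<in>D. t)"
    proof (intro sum.cong refl)
      fix d assume "d \<in> D"
      have "(\<Sum>i=1..m. if d \<in> A i then 1 else 0) = card ({1..m} \<inter> {i. d \<in> A i})"
        by (simp add: sum.If_cases)
      also have "{1..m} \<inter> {i. d \<in> A i} = {i\<in>{1..m}. d \<in> A i}" by blast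
      also have "card \<dots> = t" using cnt[OF \<open>d \<in> D\<close>] .
      finally show "(\<Sum>i=1..m. if d \<in> A i then 1 else 0) = t" .
    qed
    finally show ?thesis by simp
  qed
  have sh: "real t * (G D - G {}) \<le> (\<Sum>i\<in>{1..m}. G (A i) - G {})"
    by (rule shearer[OF finD _ Gsub AD cnt]) auto
  have HAs: "(\<Sum>i=1..m. entropy 2 (count_space (R (A i) ` space (pin_space E n))) (R (A i))) \<le> real t * real (card D)"
  proof -
    have "(\<Sum>i=1..m. entropy 2 (count_space (R (A i) ` space (pin_space E n))) (R (A i))) \<le> (\<Sum>i=1..m. real (card (A i)))"
      by (rule sum_mono) (rule HA[OF AD])
    also have "\<dots> = real t * real (card D)" using arg_cong[OF sumA, of real] by simp
    finally show ?thesis .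
  qed
  have MI: "mutual_information 2 (count_space (R (A i) ` space (pin_space E n))) (count_space (L ` space (pin_space E n))) (R (A i)) L
     = entropy 2 (count_space (R (A i) ` space (pin_space E n))) (R (A i))
       + entropy 2 (count_space (L ` space (pin_space E n))) L - G (A i)" for i
    unfolding G_def by (rule mi_eq[OF sfR[OF AD] sfL])
  show ?thesis
    unfolding pinX MI sum.distrib sum_subtractf
    using sh HAs GD HD G0 by (simp add: sum_subtractf algebra_simps)
qed

end
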